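(* Let $\alpha,\gamma,\mu,\delta,\rho>0$, $\beta=\alpha+\gamma$, and consider \[ \dot P=P\big[(\beta-\mu)-2\beta P+(\delta-\beta)A\big],\qquad \dot A=-(2\delta P+\rho)A \] on $\mathcal F=\{(P,A): P\ge0,\ A\ge0,\ 2P+A\le1\}$. (i) If $\beta\le\mu$, then $E_0=(0,0)$ is globally asymptotically stable on $\mathcal F$: $P(t)\to0$ and $A(t)\to0$ for all initial conditions in $\mathcal F$. (ii) If $\beta>\mu$, then the edge $\{P=0\}$ is forward invariant; every initial condition with $P_0=0$ gives $P(t)\equiv0$, $A(t)\to0$, so the trajectory converges to $E_0$; every initial condition in $\mathcal F$ with $P_0>0$ converges to $E_1=\big(\tfrac12(1-\mu/\beta),0\big)$. In this regime $E_0$ is a saddle and $E_1$ is locally asymptotically stable. *)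

theory Defs
  imports "HOL-Analysis.Analysis"
begin

definition pa_field :: "real \<Rightarrow> real \<Rightarrow> real \<Rightarrow> real \<Rightarrow> real \<Rightarrow> real \<times> real \<Rightarrow> real \<times> real" where
  "pa_field \<alpha> \<gamma> \<mu> \<delta> \<rho> z =
     (let \<beta> = \<alpha> + \<gamma>; p = fst z; a = snd z in
      (p * ((\<beta> - \<mu>) - 2 * \<beta> * p + (\<delta> - \<beta>) * a), - (2 * \<delta> * p + \<rho>) * a))"

definition feas :: "(real \<times> real) set" where
  "feas = {z. fst z \<ge> 0 \<and> snd z \<ge> 0 \<and> 2 * fst z + snd z \<le> 1}"

definition is_solution :: "('a::real_normed_vector \<Rightarrow> 'a) \<Rightarrow> (real \<Rightarrow> 'a) \<Rightarrow> bool" where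
  "is_solution f x \<longleftrightarrow>
     (\<forall>t\<ge>0. (x has_vector_derivative f (x t)) (at t within {0..}))"

definition loc_asym_stable :: "'a set \<Rightarrow> ('a::real_normed_vector \<Rightarrow> 'a) \<Rightarrow> 'a \<Rightarrow> bool" where
  "loc_asym_stable S f e \<longleftrightarrow>
     f e = 0 \<and>
     (\<forall>\<epsilon>>0. \<exists>d>0. \<forall>x. is_solution f x \<and> x 0 \<in> S \<and> dist (x 0) e < d \<longrightarrow>
          (\<forall>t\<ge>0. dist (x t) e < \<epsilon>)) \<and>
     (\<exists>\<eta>>0. \<forall>x. is_solution f x \<and> x 0 \<in> S \<and> dist (x 0) e < \<eta> \<longrightarrow>
          (x \<longlongrightarrow> e) at_top)"

definition glob_asym_stable :: "'a set \<Rightarrow> ('a::real_normed_vector \<Rightarrow> 'a) \<Rightarrow> 'a \<Rightarrow> bool" where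
  "glob_asym_stable S f e \<longleftrightarrow>
     loc_asym_stable S f e \<and>
     (\<forall>x. is_solution f x \<and> x 0 \<in> S \<longrightarrow> (x \<longlongrightarrow> e) at_top)"

definition is_saddle :: "('a::real_normed_vector \<Rightarrow> 'a) \<Rightarrow> 'a \<Rightarrow> bool" where
  "is_saddle f e \<longleftrightarrow>
     f e = 0 \<and>
     (\<exists>J. (f has_derivative J) (at e) \<and>
        (\<exists>v1 v2 l1 l2. v1 \<noteq> 0 \<and> v2 \<noteq> 0 \<and> J v1 = l1 *\<^sub>R v1 \<and> J v2 = l2 *\<^sub>R v2
                      \<and> l1 < 0 \<and> 0 < l2))"

end

theory Submission
  imports Defs
begin
lemma inv_le:
  fixes y y' :: "real \<Rightarrow> real"
  assumes d: "\<And>t. t \<ge> 0 \<Longrightarrow> (y has_real_derivative y' t) (at t within {0..})"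
    and T: "T \<ge> 0" and yT: "y T \<le> L" and h: "\<And>t. t \<ge> T \<Longrightarrow> y t > L \<Longrightarrow> y' t \<le> 0"
  shows "\<And>t. t \<ge> T \<Longrightarrow> y t \<le> L"
proof (rule ccontr)
  fix t2 assume t2: "t2 \<ge> T" and nle: "\<not> y t2 \<le> L"
  have cont: "continuous_on {0..} y"
    using d by (metis DERIV_continuous atLeast_iff continuous_on_eq_continuous_within)
  define S where "S = {T..t2} \<inter> y -` {..L}"
  have "closed S" unfolding S_def
    by (rule continuous_closed_preimage) (use cont T in \<open>auto intro: continuous_on_subset\<close>)
  moreover have "bounded S" unfolding S_def by (rule bounded_subset[of "{T..t2}"]) auto
  ultimately have "compact S" by (simp add: compact_eq_bounded_closed)
  moreover have "S \<noteq> {}" using yT t2 unfolding S_def by auto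
  ultimately obtain s0 where s0: "s0 \<in> S" "\<And>s. s \<in> S \<Longrightarrow> s \<le> s0"
    using compact_attains_sup by metis
  have s0b: "T \<le> s0" "s0 \<le> t2" "y s0 \<le> L" using s0 unfolding S_def by auto
  have lt: "s0 < t2" using s0b nle by (metis order.order_iff_strict)
  have "\<exists>z\<in>{s0<..<t2}. y t2 - y s0 = (\<lambda>h. y' z * h) (t2 - s0)"
    apply (rule mvt_simple[OF lt])
    apply (rule has_field_derivative_imp_has_derivative)
    apply (rule DERIV_subset[OF d])
    using s0b T by auto
  then obtain z where z: "s0 < z" "z < t2" "y t2 - y s0 = (t2 - s0) * y' z" by auto
  have "y z > L"
  proof (rule ccontr)
    assume "\<not> y z > L"
    then have "z \<in> S" using z s0b unfolding S_def by auto
    then show False using s0(2) z by fastforce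
  qed
  then have "y' z \<le> 0" using h z s0b by auto
  then have "(t2 - s0) * y' z \<le> 0" using lt by (simp add: mult_nonneg_nonpos)
  then show False using z s0b nle by linarith
qed

lemma eventually_le_barrier:
  fixes y y' :: "real \<Rightarrow> real"
  assumes d: "\<And>t. t \<ge> 0 \<Longrightarrow> (y has_real_derivative y' t) (at t within {0..})"
    and T: "T \<ge> 0" and k: "\<kappa> > 0" and h: "\<And>t. t \<ge> T \<Longrightarrow> y t \<ge> L \<Longrightarrow> y' t \<le> - \<kappa>"
  shows "\<exists>T'\<ge>T. \<forall>t\<ge>T'. y t \<le> L"
proof -
  have "\<exists>T'\<ge>T. y T' \<le> L"
  proof (rule ccontr)
    assume A: "\<not> (\<exists>T'\<ge>T. y T' \<le> L)"
    define N where "N = \<bar>y T - L\<bar> / \<kappa> + 1"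
    have "\<bar>y T - L\<bar> / \<kappa> \<ge> 0" using k by simp
    then have N: "N > 0" by (simp add: N_def)
    have "\<exists>z\<in>{T<..<T+N}. y (T+N) - y T = (\<lambda>h. y' z * h) (T + N - T)"
      apply (rule mvt_simple)
      using N apply simp
      apply (rule has_field_derivative_imp_has_derivative)
      apply (rule DERIV_subset[OF d])
      using T by auto
    then obtain z where z: "T < z" "y (T+N) - y T = N * y' z" by auto
    have "y' z \<le> - \<kappa>" using h[of z] A z by (meson less_imp_le not_le)
    then have "N * y' z \<le> N * (-\<kappa>)" using N by (intro mult_left_mono) auto
    also have "N * (-\<kappa>) = - \<bar>y T - L\<bar> - \<kappa>" using k by (simp add: N_def field_simps)
    finally have "y (T+N) < L" using z k by linarith
    then show False using A N by (meson less_add_same_cancel1 less_eq_real_def not_less)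
  qed
  then obtain T' where T': "T' \<ge> T" "y T' \<le> L" by auto
  have "\<forall>t\<ge>T'. y t \<le> L"
    using inv_le[OF d _ T'(2), of ] T' T h k
    by (smt (verit, ccfv_SIG))
  then show ?thesis using T' by auto
qed

lemma lin_ode:
  fixes y h :: "real \<Rightarrow> real"
  assumes d: "\<And>t. t \<ge> 0 \<Longrightarrow> (y has_real_derivative y t * h t) (at t within {0..})"
    and c: "continuous_on {0..} h" and b: "b \<ge> 0"
  shows "y b = y 0 * exp (integral {0..b} h)"
proof -
  define H where "H s = integral {0..s} h" for s
  have cb: "continuous_on {0..b} h" using c by (rule continuous_on_subset) auto
  have dH: "(H has_real_derivative h s) (at s within {0..b})" if "s \<in> {0..b}" for s
    unfolding H_def by (rule integral_has_real_derivative[OF cb that])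
  have dz: "((\<lambda>s. y s * exp (- H s)) has_real_derivative 0) (at s within {0..b})" if s: "s \<in> {0..b}" for s
  proof -
    have dy: "(y has_real_derivative y s * h s) (at s within {0..b})"
      by (rule DERIV_subset[OF d]) (use s in auto)
    show ?thesis
      by (rule derivative_eq_intros dy dH[OF s] refl | simp)+
  qed
  obtain k where k: "\<forall>s\<in>{0..b}. y s * exp (- H s) = k"
    using has_field_derivative_zero_constant[of "{0..b}", OF convex_real_interval(5) dz] by blast
  have "y b * exp (- H b) = y 0 * exp (- H 0)" using k b by auto
  then have "y b * exp (- H b) = y 0" by (simp add: H_def)
  then show ?thesis unfolding H_def by (simp add: exp_minus field_simps)
qed

locale sol =
  fixes \<alpha> \<gamma> \<mu> \<delta> \<rho> \<beta> :: real and x :: "real \<Rightarrow> real \<times> real"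
  assumes pos: "\<alpha> > 0" "\<gamma> > 0" "\<mu> > 0" "\<delta> > 0" "\<rho> > 0"
    and beta: "\<beta> = \<alpha> + \<gamma>"
    and sol: "is_solution (pa_field \<alpha> \<gamma> \<mu> \<delta> \<rho>) x"
    and init: "x 0 \<in> feas"
begin

definition p where "p t = fst (x t)"
definition a where "a t = snd (x t)"
definition g where "g t = (\<beta> - \<mu>) - 2 * \<beta> * p t + (\<delta> - \<beta>) * a t"

lemma bpos: "\<beta> > 0" using pos beta by simp

lemma init': "p 0 \<ge> 0" "a 0 \<ge> 0" "2 * p 0 + a 0 \<le> 1"
  using init by (auto simp: feas_def p_def a_def)

lemma fx: "pa_field \<alpha> \<gamma> \<mu> \<delta> \<rho> (x t) = (p t * g t, a t * (- (2 * \<delta> * p t + \<rho>)))"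
  unfolding g_def p_def a_def by (simp add: pa_field_def Let_def beta algebra_simps)

lemma dx: "t \<ge> 0 \<Longrightarrow> (x has_vector_derivative (p t * g t, a t * (- (2 * \<delta> * p t + \<rho>)))) (at t within {0..})"
  using sol unfolding is_solution_def fx by simp

lemma dp: "t \<ge> 0 \<Longrightarrow> (p has_real_derivative p t * g t) (at t within {0..})"
proof -
  assume t: "t \<ge> 0"
  have "((\<lambda>s. fst (x s)) has_derivative (\<lambda>h. fst (h *\<^sub>R (p t * g t, a t * (- (2 * \<delta> * p t + \<rho>)))))) (at t within {0..})"
    using dx[OF t] unfolding has_vector_derivative_def by (rule has_derivative_fst)
  then show ?thesis unfolding has_field_derivative_def p_def[abs_def]
    by (rule has_derivative_eq_rhs) (simp add: fun_eq_iff p_def)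
qed

lemma da: "t \<ge> 0 \<Longrightarrow> (a has_real_derivative a t * (- (2 * \<delta> * p t + \<rho>))) (at t within {0..})"
proof -
  assume t: "t \<ge> 0"
  have "((\<lambda>s. snd (x s)) has_derivative (\<lambda>h. snd (h *\<^sub>R (p t * g t, a t * (- (2 * \<delta> * p t + \<rho>)))))) (at t within {0..})"
    using dx[OF t] unfolding has_vector_derivative_def by (rule has_derivative_snd)
  then show ?thesis unfolding has_field_derivative_def a_def[abs_def]
    by (rule has_derivative_eq_rhs) (simp add: fun_eq_iff a_def)
qed

lemma contx: "continuous_on {0..} x"
  using dx by (metis has_vector_derivative_continuous atLeast_iff continuous_on_eq_continuous_within)

lemma contp: "continuous_on {0..} p" unfolding p_def[abs_def] by (intro continuous_intros contx)
lemma conta: "continuous_on {0..} a" unfolding a_def[abs_def] by (intro continuous_intros contx)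
lemma contg: "continuous_on {0..} g" unfolding g_def[abs_def] by (intro continuous_intros contp conta)

lemma p_formula: "t \<ge> 0 \<Longrightarrow> p t = p 0 * exp (integral {0..t} g)"
  by (rule lin_ode[OF dp contg])

lemma a_formula: "t \<ge> 0 \<Longrightarrow> a t = a 0 * exp (integral {0..t} (\<lambda>s. - (2 * \<delta> * p s + \<rho>)))"
  by (rule lin_ode[OF da]) (auto intro!: continuous_intros contp)

lemma p_nonneg: "t \<ge> 0 \<Longrightarrow> p t \<ge> 0"
proof -
  assume t: "t \<ge> 0"
  show ?thesis unfolding p_formula[OF t] using init' by simp
qed
lemma a_nonneg: "t \<ge> 0 \<Longrightarrow> a t \<ge> 0"
proof -
  assume t: "t \<ge> 0"
  show ?thesis unfolding a_formula[OF t] using init' by simp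
qed
lemma p_zero: "p 0 = 0 \<Longrightarrow> t \<ge> 0 \<Longrightarrow> p t = 0"
proof -
  assume t: "t \<ge> 0" and z: "p 0 = 0"
  show ?thesis unfolding p_formula[OF t] z by simp
qed
lemma p_pos: "p 0 > 0 \<Longrightarrow> t \<ge> 0 \<Longrightarrow> p t > 0"
proof -
  assume t: "t \<ge> 0" and z: "p 0 > 0"
  show ?thesis unfolding p_formula[OF t] using z by simp
qed

lemma a_bound: "t \<ge> 0 \<Longrightarrow> a t \<le> a 0 * exp (- \<rho> * t)"
proof -
  assume t: "t \<ge> 0"
  have d: "((\<lambda>s. a s * exp (\<rho> * s)) has_real_derivative
      a s * (- (2 * \<delta> * p s + \<rho>)) * exp (\<rho> * s) + a s * (exp (\<rho> * s) * \<rho>)) (at s within {0..})"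
    if "s \<ge> 0" for s
    by (rule derivative_eq_intros da[OF that] refl | simp)+
  have "a t * exp (\<rho> * t) \<le> a 0"
  proof (rule inv_le[OF d order.refl, of "a 0" t])
    show "a 0 * exp (\<rho> * 0) \<le> a 0" by simp
    fix s :: real assume s: "0 \<le> s"
    have "a s * (- (2 * \<delta> * p s + \<rho>)) * exp (\<rho> * s) + a s * (exp (\<rho> * s) * \<rho>)
        = - (2 * \<delta>) * (p s * a s * exp (\<rho> * s))" by (simp add: algebra_simps)
    also have "\<dots> \<le> 0" using pos p_nonneg[OF s] a_nonneg[OF s]
      by (intro mult_nonpos_nonneg) auto
    finally show "a s * (- (2 * \<delta> * p s + \<rho>)) * exp (\<rho> * s) + a s * (exp (\<rho> * s) * \<rho>) \<le> 0" .
  qed (use t in auto)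
  then have "a t * exp (\<rho> * t) * exp (- \<rho> * t) \<le> a 0 * exp (- \<rho> * t)"
    by (rule mult_right_mono) simp
  moreover have "a t * exp (\<rho> * t) * exp (- \<rho> * t) = a t"
    by (simp add: mult.assoc flip: exp_add)
  ultimately show ?thesis by linarith
qed

lemma a_le: "t \<ge> 0 \<Longrightarrow> a t \<le> a 0"
proof -
  assume t: "t \<ge> 0"
  have "exp (- \<rho> * t) \<le> 1" using pos t by simp
  then have "a 0 * exp (- \<rho> * t) \<le> a 0" using init' by (simp add: mult_left_le)
  then show ?thesis using a_bound[OF t] by linarith
qed

lemma a_tendsto: "(a \<longlongrightarrow> 0) at_top"
proof (rule tendsto_sandwich[of "\<lambda>_. 0" _ _ "\<lambda>t. a 0 * exp (- \<rho> * t)"])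
  show "\<forall>\<^sub>F t in at_top. 0 \<le> a t"
    using eventually_ge_at_top[of "0::real"] by (rule eventually_mono) (rule a_nonneg)
  show "\<forall>\<^sub>F t in at_top. a t \<le> a 0 * exp (- \<rho> * t)"
    using eventually_ge_at_top[of "0::real"] by (rule eventually_mono) (rule a_bound)
  have "LIM t at_top. \<rho> * t :> at_top"
    by (rule filterlim_tendsto_pos_mult_at_top[OF tendsto_const pos(5) filterlim_ident])
  then have "LIM t at_top. - (\<rho> * t) :> at_bot"
    using filterlim_uminus_at_top by blast
  then have "((\<lambda>t. exp (- (\<rho> * t))) \<longlongrightarrow> 0) at_top" by (rule filterlim_compose[OF exp_at_bot])
  then show "((\<lambda>t. a 0 * exp (- \<rho> * t)) \<longlongrightarrow> 0) at_top" by (simp add: tendsto_mult_right_zero)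
qed simp

end

lemma exp_decay: "(\<rho>::real) > 0 \<Longrightarrow> ((\<lambda>t. exp (- \<rho> * t)) \<longlongrightarrow> 0) at_top"
proof -
  assume r: "\<rho> > 0"
  have "LIM t at_top. \<rho> * t :> at_top"
    by (rule filterlim_tendsto_pos_mult_at_top[OF tendsto_const r filterlim_ident])
  then have "LIM t at_top. - (\<rho> * t) :> at_bot"
    using filterlim_uminus_at_top by blast
  then show ?thesis using filterlim_compose[OF exp_at_bot] by simp
qed

lemma tend_bounds:
  fixes f :: "real \<Rightarrow> real"
  assumes "\<And>\<epsilon>. \<epsilon> > 0 \<Longrightarrow> \<exists>T. \<forall>t\<ge>T. f t \<le> l + \<epsilon> \<and> f t \<ge> l - \<epsilon>"
  shows "(f \<longlongrightarrow> l) at_top"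
proof (rule tendstoI)
  fix e :: real assume e: "e > 0"
  obtain T where T: "\<forall>t\<ge>T. f t \<le> l + e/2 \<and> f t \<ge> l - e/2" using assms[of "e/2"] e by auto
  show "\<forall>\<^sub>F t in at_top. dist (f t) l < e"
    unfolding eventually_at_top_linorder
    by (rule exI[of _ T]) (use T e in \<open>auto simp: dist_real_def abs_less_iff\<close>)
qed

context sol begin

lemma two_beta_q: "2 * \<beta> * ((\<beta> - \<mu>) / (2 * \<beta>)) = \<beta> - \<mu>"
  using bpos by (simp add: field_simps)

lemma g_upper: "t \<ge> 0 \<Longrightarrow> g t \<le> (\<beta> - \<mu>) - 2 * \<beta> * p t + \<bar>\<delta> - \<beta>\<bar> * a 0 * exp (- \<rho> * t)"
proof -
  assume t: "t \<ge> 0"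
  have "(\<delta> - \<beta>) * a t \<le> \<bar>\<delta> - \<beta>\<bar> * a t" using a_nonneg[OF t] by (intro mult_right_mono) auto
  also have "\<dots> \<le> \<bar>\<delta> - \<beta>\<bar> * (a 0 * exp (- \<rho> * t))" using a_bound[OF t] by (intro mult_left_mono) auto
  finally show ?thesis unfolding g_def by (simp add: mult.assoc)
qed

lemma g_lower: "t \<ge> 0 \<Longrightarrow> g t \<ge> (\<beta> - \<mu>) - 2 * \<beta> * p t - \<bar>\<delta> - \<beta>\<bar> * a 0 * exp (- \<rho> * t)"
proof -
  assume t: "t \<ge> 0"
  have "- ((\<delta> - \<beta>) * a t) = (- (\<delta> - \<beta>)) * a t" by (metis minus_mult_left)
  also have "\<dots> \<le> \<bar>\<delta> - \<beta>\<bar> * a t" using a_nonneg[OF t] by (intro mult_right_mono) auto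
  also have "\<dots> \<le> \<bar>\<delta> - \<beta>\<bar> * (a 0 * exp (- \<rho> * t))" using a_bound[OF t] by (intro mult_left_mono) auto
  finally show ?thesis unfolding g_def mult.assoc by linarith
qed

lemma ee_small: "\<eta> > 0 \<Longrightarrow> \<exists>T\<ge>0. \<forall>t\<ge>T. \<bar>\<delta> - \<beta>\<bar> * a 0 * exp (- \<rho> * t) \<le> \<eta>"
proof -
  assume e: "\<eta> > 0"
  have "((\<lambda>t. \<bar>\<delta> - \<beta>\<bar> * a 0 * exp (- \<rho> * t)) \<longlongrightarrow> \<bar>\<delta> - \<beta>\<bar> * a 0 * 0) at_top"
    by (intro tendsto_mult tendsto_const exp_decay pos)
  then have "\<forall>\<^sub>F t in at_top. \<bar>\<delta> - \<beta>\<bar> * a 0 * exp (- \<rho> * t) < \<eta>"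
    using e by (auto dest: order_tendstoD(2))
  then obtain N where N: "\<forall>t\<ge>N. \<bar>\<delta> - \<beta>\<bar> * a 0 * exp (- \<rho> * t) < \<eta>"
    unfolding eventually_at_top_linorder by auto
  show ?thesis by (rule exI[of _ "max N 0"]) (use N in auto)
qed

end

context sol begin

lemma p_upper:
  assumes t: "t \<ge> 0"
  shows "p t \<le> max (p 0) (max 0 ((\<beta> - \<mu>) / (2 * \<beta>))) * exp (\<bar>\<delta> - \<beta>\<bar> * a 0 / \<rho>)"
proof -
  define K where "K = \<bar>\<delta> - \<beta>\<bar>"
  define Q where "Q = max 0 ((\<beta> - \<mu>) / (2 * \<beta>))"
  define E where "E s = exp (K * a 0 * exp (- \<rho> * s) / \<rho>)" for s
  define M where "M = max (p 0) Q * exp (K * a 0 / \<rho>)"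
  have K0: "K \<ge> 0" unfolding K_def by simp
  have a00: "a 0 \<ge> 0" using init' by simp
  have Kq: "\<beta> - \<mu> \<le> 2 * \<beta> * Q" unfolding Q_def using two_beta_q bpos
    by (metis max.cobounded2 mult_left_mono less_eq_real_def mult_pos_pos zero_less_numeral)
  have E1: "E s \<ge> 1" for s unfolding E_def using K0 a00 pos by simp
  have EM: "E s \<le> exp (K * a 0 / \<rho>)" if s: "s \<ge> 0" for s
  proof -
    have "exp (- \<rho> * s) \<le> 1" using pos s by simp
    then have "K * a 0 * exp (- \<rho> * s) \<le> K * a 0" using K0 a00 by (simp add: mult_left_le)
    then show ?thesis unfolding E_def using pos by (simp add: divide_right_mono)
  qed
  have dU: "((\<lambda>s. p s * E s) has_real_derivative p s * E s * (g s - K * a 0 * exp (- \<rho> * s))) (at s within {0..})"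
    if s: "s \<ge> 0" for s
    unfolding E_def
    apply (rule derivative_eq_intros dp[OF s] refl)+
    using pos by (auto simp: field_simps)
  have "p t * E t \<le> M"
  proof (rule inv_le[OF dU order.refl, of M t])
    show "p 0 * E 0 \<le> M" unfolding M_def E_def using init' by (simp add: mult_right_mono)
    fix s :: real assume s: "0 \<le> s" and gt: "p s * E s > M"
    have pQ: "p s > Q"
    proof (rule ccontr)
      assume "\<not> p s > Q"
      then have "p s * E s \<le> Q * E s" using E1[of s] by (intro mult_right_mono) auto
      also have "\<dots> \<le> Q * exp (K * a 0 / \<rho>)" using EM[OF s] by (intro mult_left_mono) (auto simp: Q_def)
      also have "\<dots> \<le> M" unfolding M_def by (intro mult_right_mono) auto
      finally show False using gt by simp
    qed
    have "g s - K * a 0 * exp (- \<rho> * s) \<le> (\<beta> - \<mu>) - 2 * \<beta> * p s"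
      using g_upper[OF s] unfolding K_def by simp
    also have "\<dots> \<le> 0" using pQ Kq bpos by (smt (verit) mult_strict_left_mono)
    finally have "g s - K * a 0 * exp (- \<rho> * s) \<le> 0" .
    moreover have "p s * E s \<ge> 0" using p_nonneg[OF s] E1[of s] by simp
    ultimately show "p s * E s * (g s - K * a 0 * exp (- \<rho> * s)) \<le> 0"
      by (simp add: mult_nonneg_nonpos)
  qed (use t in auto)
  moreover have "p t \<le> p t * E t" using p_nonneg[OF t] E1[of t] by (simp add: mult_le_cancel_left1)
  ultimately show ?thesis unfolding M_def K_def Q_def by linarith
qed

end

context sol begin

lemma p_lower:
  assumes c: "\<beta> > \<mu>" and t: "t \<ge> 0"
  shows "p t \<ge> min (p 0) ((\<beta> - \<mu>) / (2 * \<beta>)) * exp (- (\<bar>\<delta> - \<beta>\<bar> * a 0 / \<rho>))"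
proof -
  define K where "K = \<bar>\<delta> - \<beta>\<bar>"
  define q where "q = (\<beta> - \<mu>) / (2 * \<beta>)"
  define F where "F s = exp (- (K * a 0 * exp (- \<rho> * s) / \<rho>))" for s
  define m where "m = min (p 0) q * exp (- (K * a 0 / \<rho>))"
  have K0: "K \<ge> 0" unfolding K_def by simp
  have a00: "a 0 \<ge> 0" using init' by simp
  have q0: "q > 0" unfolding q_def using c bpos by simp
  have Kq: "2 * \<beta> * q = \<beta> - \<mu>" unfolding q_def by (rule two_beta_q)
  have F1: "F s \<le> 1" for s unfolding F_def using K0 a00 pos by simp
  have F0: "F s \<ge> 0" for s unfolding F_def by simp
  have FM: "F s \<ge> exp (- (K * a 0 / \<rho>))" if s: "s \<ge> 0" for s
  proof -
    have "exp (- \<rho> * s) \<le> 1" using pos s by simp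
    then have "K * a 0 * exp (- \<rho> * s) \<le> K * a 0" using K0 a00 by (simp add: mult_left_le)
    then show ?thesis unfolding F_def using pos by (simp add: divide_right_mono)
  qed
  have dV: "((\<lambda>s. - (p s * F s)) has_real_derivative - (p s * F s * (g s + K * a 0 * exp (- \<rho> * s)))) (at s within {0..})"
    if s: "s \<ge> 0" for s
    unfolding F_def
    apply (rule derivative_eq_intros dp[OF s] refl)+
    using pos by (auto simp: field_simps)
  have "- (p t * F t) \<le> - m"
  proof (rule inv_le[OF dV order.refl, of "- m" t])
    show "- (p 0 * F 0) \<le> - m" unfolding m_def F_def using init' by (simp add: mult_right_mono)
    fix s :: real assume s: "0 \<le> s" and gt: "- (p s * F s) > - m"
    have pq: "p s < q"
    proof (rule ccontr)
      assume "\<not> p s < q"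
      then have "q * F s \<le> p s * F s" using F0[of s] by (intro mult_right_mono) auto
      moreover have "q * exp (- (K * a 0 / \<rho>)) \<le> q * F s" using FM[OF s] q0 by (intro mult_left_mono) auto
      moreover have "m \<le> q * exp (- (K * a 0 / \<rho>))" unfolding m_def by (intro mult_right_mono) auto
      ultimately show False using gt by simp
    qed
    have "2 * \<beta> * p s \<le> 2 * \<beta> * q" using pq bpos by (intro mult_left_mono) auto
    then have "0 \<le> (\<beta> - \<mu>) - 2 * \<beta> * p s" using Kq by linarith
    also have "\<dots> \<le> g s + K * a 0 * exp (- \<rho> * s)"
      using g_lower[OF s] unfolding K_def by simp
    finally have "0 \<le> g s + K * a 0 * exp (- \<rho> * s)" .
    moreover have "p s * F s \<ge> 0" using p_nonneg[OF s] F0[of s] by simp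
    ultimately show "- (p s * F s * (g s + K * a 0 * exp (- \<rho> * s))) \<le> 0"
      by simp
  qed (use t in auto)
  moreover have "p t * F t \<le> p t" using p_nonneg[OF t] F1[of t] by (simp add: mult_left_le)
  ultimately show ?thesis unfolding m_def K_def q_def by linarith
qed

lemma p_ev_upper:
  assumes e: "\<epsilon> > 0"
  shows "\<exists>T. \<forall>t\<ge>T. p t \<le> max 0 ((\<beta> - \<mu>) / (2 * \<beta>)) + \<epsilon>"
proof -
  define Q where "Q = max 0 ((\<beta> - \<mu>) / (2 * \<beta>))"
  have Kq: "\<beta> - \<mu> \<le> 2 * \<beta> * Q" unfolding Q_def using two_beta_q bpos
    by (metis max.cobounded2 mult_left_mono less_eq_real_def mult_pos_pos zero_less_numeral)
  have Q0: "Q \<ge> 0" unfolding Q_def by simp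
  obtain T where T: "T \<ge> 0" "\<forall>t\<ge>T. \<bar>\<delta> - \<beta>\<bar> * a 0 * exp (- \<rho> * t) \<le> \<beta> * \<epsilon>"
    using ee_small[of "\<beta> * \<epsilon>"] bpos e by auto
  have "\<exists>T'\<ge>T. \<forall>t\<ge>T'. p t \<le> Q + \<epsilon>"
  proof (rule eventually_le_barrier[OF dp T(1)])
    show "\<beta> * \<epsilon> * \<epsilon> > 0" using bpos e by simp
    fix t :: real assume t: "t \<ge> T" and pt: "p t \<ge> Q + \<epsilon>"
    have t0: "t \<ge> 0" using t T by simp
    have "2 * \<beta> * (Q + \<epsilon>) \<le> 2 * \<beta> * p t" using pt bpos by (intro mult_left_mono) auto
    moreover have "\<bar>\<delta> - \<beta>\<bar> * a 0 * exp (- \<rho> * t) \<le> \<beta> * \<epsilon>" using T(2) t by simp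
    ultimately have "g t \<le> - (\<beta> * \<epsilon>)" using g_upper[OF t0] Kq by (simp add: algebra_simps)
    then have "p t * g t \<le> p t * (- (\<beta> * \<epsilon>))" using p_nonneg[OF t0] by (intro mult_left_mono) auto
    also have "\<dots> \<le> \<epsilon> * (- (\<beta> * \<epsilon>))" using pt Q0 bpos e by (intro mult_right_mono_neg) auto
    finally show "p t * g t \<le> - (\<beta> * \<epsilon> * \<epsilon>)" by (simp add: algebra_simps)
  qed
  then show ?thesis unfolding Q_def by auto
qed

lemma p_ev_lower:
  assumes c: "\<beta> > \<mu>" and p0: "p 0 > 0" and e: "\<epsilon> > 0"
  shows "\<exists>T. \<forall>t\<ge>T. p t \<ge> (\<beta> - \<mu>) / (2 * \<beta>) - \<epsilon>"
proof -
  define q where "q = (\<beta> - \<mu>) / (2 * \<beta>)"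
  define m where "m = min (p 0) q * exp (- (\<bar>\<delta> - \<beta>\<bar> * a 0 / \<rho>))"
  have q0: "q > 0" unfolding q_def using c bpos by simp
  have Kq: "2 * \<beta> * q = \<beta> - \<mu>" unfolding q_def by (rule two_beta_q)
  have m0: "m > 0" unfolding m_def using q0 p0 by simp
  have pm: "t \<ge> 0 \<Longrightarrow> p t \<ge> m" for t unfolding m_def q_def using p_lower[OF c] by simp
  obtain T where T: "T \<ge> 0" "\<forall>t\<ge>T. \<bar>\<delta> - \<beta>\<bar> * a 0 * exp (- \<rho> * t) \<le> \<beta> * \<epsilon>"
    using ee_small[of "\<beta> * \<epsilon>"] bpos e by auto
  have dm: "((\<lambda>s. - p s) has_real_derivative - (p s * g s)) (at s within {0..})" if "s \<ge> 0" for s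
    using dp[OF that] by (rule DERIV_minus)
  have "\<exists>T'\<ge>T. \<forall>t\<ge>T'. - p t \<le> - (q - \<epsilon>)"
  proof (rule eventually_le_barrier[OF dm T(1)])
    show "m * \<beta> * \<epsilon> > 0" using bpos e m0 by simp
    fix t :: real assume t: "t \<ge> T" and pt: "- p t \<ge> - (q - \<epsilon>)"
    have t0: "t \<ge> 0" using t T by simp
    have "2 * \<beta> * p t \<le> 2 * \<beta> * (q - \<epsilon>)" using pt bpos by (intro mult_left_mono) auto
    moreover have "\<bar>\<delta> - \<beta>\<bar> * a 0 * exp (- \<rho> * t) \<le> \<beta> * \<epsilon>" using T(2) t by simp
    ultimately have "g t \<ge> \<beta> * \<epsilon>" using g_lower[OF t0] Kq by (simp add: algebra_simps)
    then have "p t * (\<beta> * \<epsilon>) \<le> p t * g t" using p_nonneg[OF t0] by (intro mult_left_mono) auto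
    moreover have "m * (\<beta> * \<epsilon>) \<le> p t * (\<beta> * \<epsilon>)" using pm[OF t0] bpos e by (intro mult_right_mono) auto
    ultimately show "- (p t * g t) \<le> - (m * \<beta> * \<epsilon>)" by (simp add: algebra_simps)
  qed
  then obtain T' where "\<forall>t\<ge>T'. - p t \<le> - (q - \<epsilon>)" by auto
  then have "\<forall>t\<ge>T'. p t \<ge> q - \<epsilon>" by auto
  then show ?thesis unfolding q_def by blast
qed

lemma p_tendsto_low: "\<beta> \<le> \<mu> \<Longrightarrow> (p \<longlongrightarrow> 0) at_top"
proof (rule tend_bounds)
  fix e :: real assume c: "\<beta> \<le> \<mu>" and e: "e > 0"
  have "(\<beta> - \<mu>) / (2 * \<beta>) \<le> 0" using c bpos by (simp add: divide_nonpos_pos)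
  then have "max 0 ((\<beta> - \<mu>) / (2 * \<beta>)) = 0" by simp
  then obtain T where T: "\<forall>t\<ge>T. p t \<le> 0 + e" using p_ev_upper[OF e] by auto
  show "\<exists>T. \<forall>t\<ge>T. p t \<le> 0 + e \<and> p t \<ge> 0 - e"
  proof (rule exI[of _ "max T 0"], intro allI impI)
    fix t assume "t \<ge> max T 0"
    then show "p t \<le> 0 + e \<and> p t \<ge> 0 - e" using T p_nonneg[of t] e by auto
  qed
qed

lemma p_tendsto_high: "\<beta> > \<mu> \<Longrightarrow> p 0 > 0 \<Longrightarrow> (p \<longlongrightarrow> (1 - \<mu> / \<beta>) / 2) at_top"
proof -
  assume c: "\<beta> > \<mu>" and p0: "p 0 > 0"
  have qe: "(\<beta> - \<mu>) / (2 * \<beta>) = (1 - \<mu> / \<beta>) / 2" using bpos by (simp add: field_simps)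
  have "(p \<longlongrightarrow> (\<beta> - \<mu>) / (2 * \<beta>)) at_top"
  proof (rule tend_bounds)
    fix e :: real assume e: "e > 0"
    have "(\<beta> - \<mu>) / (2 * \<beta>) \<ge> 0" using c bpos by simp
    then have "max 0 ((\<beta> - \<mu>) / (2 * \<beta>)) = (\<beta> - \<mu>) / (2 * \<beta>)" by simp
    then obtain T1 where T1: "\<forall>t\<ge>T1. p t \<le> (\<beta> - \<mu>) / (2 * \<beta>) + e" using p_ev_upper[OF e] by auto
    obtain T2 where T2: "\<forall>t\<ge>T2. p t \<ge> (\<beta> - \<mu>) / (2 * \<beta>) - e" using p_ev_lower[OF c p0 e] by auto
    show "\<exists>T. \<forall>t\<ge>T. p t \<le> (\<beta> - \<mu>) / (2 * \<beta>) + e \<and> p t \<ge> (\<beta> - \<mu>) / (2 * \<beta>) - e"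
      by (rule exI[of _ "max T1 T2"]) (use T1 T2 in auto)
  qed
  then show ?thesis using qe by simp
qed

end

lemma dist_pair_le: "dist (z::real \<times> real) w \<le> \<bar>fst z - fst w\<bar> + \<bar>snd z - snd w\<bar>"
proof -
  have "dist z w = sqrt ((fst z - fst w)\<^sup>2 + (snd z - snd w)\<^sup>2)"
    by (simp add: dist_prod_def dist_real_def)
  also have "\<dots> \<le> \<bar>fst z - fst w\<bar> + \<bar>snd z - snd w\<bar>" by (rule sqrt_sum_squares_le_sum_abs)
  finally show ?thesis .
qed

context sol begin

lemma xpa: "x = (\<lambda>t. (p t, a t))" by (simp add: p_def a_def)

lemma final_low: "\<beta> \<le> \<mu> \<Longrightarrow> ((\<lambda>t. fst (x t)) \<longlongrightarrow> 0) at_top \<and> ((\<lambda>t. snd (x t)) \<longlongrightarrow> 0) at_top \<and> (x \<longlongrightarrow> (0, 0)) at_top"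
proof -
  assume c: "\<beta> \<le> \<mu>"
  have 1: "(p \<longlongrightarrow> 0) at_top" by (rule p_tendsto_low[OF c])
  have 2: "(a \<longlongrightarrow> 0) at_top" by (rule a_tendsto)
  have "((\<lambda>t. (p t, a t)) \<longlongrightarrow> (0, 0)) at_top" by (intro tendsto_Pair 1 2)
  then show ?thesis using 1 2 unfolding p_def[abs_def] a_def[abs_def] by simp
qed

lemma final_zero: "fst (x 0) = 0 \<Longrightarrow> (\<forall>t\<ge>0. fst (x t) = 0 \<and> x t \<in> feas) \<and> ((\<lambda>t. snd (x t)) \<longlongrightarrow> 0) at_top \<and> (x \<longlongrightarrow> (0, 0)) at_top"
proof -
  assume z: "fst (x 0) = 0"
  then have p0: "p 0 = 0" by (simp add: p_def)
  have pz: "\<forall>t\<ge>0. p t = 0" using p_zero[OF p0] by auto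
  have A: "\<forall>t\<ge>0. fst (x t) = 0 \<and> x t \<in> feas"
  proof (intro allI impI)
    fix t :: real assume t: "t \<ge> 0"
    have "a t \<le> 1" using a_le[OF t] init' p0 by simp
    then show "fst (x t) = 0 \<and> x t \<in> feas" using pz t a_nonneg[OF t]
      by (auto simp: feas_def p_def a_def)
  qed
  have 1: "(p \<longlongrightarrow> 0) at_top"
    by (rule tendsto_eventually) (use pz in \<open>auto simp: eventually_at_top_linorder\<close>)
  have 2: "(a \<longlongrightarrow> 0) at_top" by (rule a_tendsto)
  have "((\<lambda>t. (p t, a t)) \<longlongrightarrow> (0, 0)) at_top" by (intro tendsto_Pair 1 2)
  then show ?thesis using A 2 unfolding p_def[abs_def] a_def[abs_def] by simp
qed

lemma final_high: "\<beta> > \<mu> \<Longrightarrow> fst (x 0) > 0 \<Longrightarrow> (x \<longlongrightarrow> ((1 - \<mu> / \<beta>) / 2, 0)) at_top"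
proof -
  assume c: "\<beta> > \<mu>" and z: "fst (x 0) > 0"
  then have p0: "p 0 > 0" by (simp add: p_def)
  have "((\<lambda>t. (p t, a t)) \<longlongrightarrow> ((1 - \<mu> / \<beta>) / 2, 0)) at_top"
    by (intro tendsto_Pair p_tendsto_high[OF c p0] a_tendsto)
  then show ?thesis by (simp add: p_def a_def)
qed

lemma stab_low:
  assumes c: "\<beta> \<le> \<mu>" and t: "t \<ge> 0"
  shows "dist (x t) (0, 0) \<le> (exp (\<bar>\<delta> - \<beta>\<bar> / \<rho>) + 1) * dist (x 0) (0, 0)"
proof -
  define D where "D = dist (x 0) (0, 0)"
  have "dist (fst (x 0)) (fst (0::real, 0::real)) \<le> D" unfolding D_def by (rule dist_fst_le)
  then have pD: "p 0 \<le> D" using init' by (simp add: p_def dist_real_def)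
  have "dist (snd (x 0)) (snd (0::real, 0::real)) \<le> D" unfolding D_def by (rule dist_snd_le)
  then have aD: "a 0 \<le> D" using init' by (simp add: a_def dist_real_def)
  have "(\<beta> - \<mu>) / (2 * \<beta>) \<le> 0" using c bpos by (simp add: divide_nonpos_pos)
  then have Q: "max (p 0) (max 0 ((\<beta> - \<mu>) / (2 * \<beta>))) = p 0" using init' by simp
  have "\<bar>\<delta> - \<beta>\<bar> * a 0 \<le> \<bar>\<delta> - \<beta>\<bar>" using init' by (simp add: mult_left_le)
  then have "\<bar>\<delta> - \<beta>\<bar> * a 0 / \<rho> \<le> \<bar>\<delta> - \<beta>\<bar> / \<rho>" using pos by (simp add: divide_right_mono)
  then have "exp (\<bar>\<delta> - \<beta>\<bar> * a 0 / \<rho>) \<le> exp (\<bar>\<delta> - \<beta>\<bar> / \<rho>)" by simp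
  then have "p t \<le> p 0 * exp (\<bar>\<delta> - \<beta>\<bar> / \<rho>)" using p_upper[OF t] Q init'
    by (metis mult_left_mono order_trans)
  also have "\<dots> \<le> D * exp (\<bar>\<delta> - \<beta>\<bar> / \<rho>)" using pD by (intro mult_right_mono) auto
  finally have pt: "p t \<le> D * exp (\<bar>\<delta> - \<beta>\<bar> / \<rho>)" .
  have "dist (x t) (0, 0) \<le> \<bar>p t\<bar> + \<bar>a t\<bar>" using dist_pair_le[of "x t" "(0,0)"] by (simp add: p_def a_def)
  also have "\<dots> = p t + a t" using p_nonneg[OF t] a_nonneg[OF t] by simp
  also have "\<dots> \<le> D * exp (\<bar>\<delta> - \<beta>\<bar> / \<rho>) + D" using pt a_le[OF t] aD by simp
  finally show ?thesis unfolding D_def by (simp add: algebra_simps)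
qed

lemma stab_high:
  assumes c: "\<beta> > \<mu>" and t: "t \<ge> 0"
    and D: "dist (x 0) ((\<beta> - \<mu>) / (2 * \<beta>), 0) \<le> D" and Dq: "D \<le> (\<beta> - \<mu>) / (2 * \<beta>)"
  shows "p t \<le> ((\<beta> - \<mu>) / (2 * \<beta>) + D) * exp (\<bar>\<delta> - \<beta>\<bar> * D / \<rho>)"
    and "p t \<ge> ((\<beta> - \<mu>) / (2 * \<beta>) - D) * exp (- (\<bar>\<delta> - \<beta>\<bar> * D / \<rho>))"
    and "\<bar>a t\<bar> \<le> D"
proof -
  define q where "q = (\<beta> - \<mu>) / (2 * \<beta>)"
  define K where "K = \<bar>\<delta> - \<beta>\<bar>"
  have q0: "q > 0" unfolding q_def using c bpos by simp
  have K0: "K \<ge> 0" unfolding K_def by simp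
  have "dist (fst (x 0)) (fst (q, 0::real)) \<le> D" using D unfolding q_def by (metis dist_fst_le order_trans)
  then have pD: "\<bar>p 0 - q\<bar> \<le> D" by (simp add: p_def dist_real_def)
  have "dist (snd (x 0)) (snd (q, 0::real)) \<le> D" using D unfolding q_def by (metis dist_snd_le order_trans)
  then have aD: "a 0 \<le> D" using init' by (simp add: a_def dist_real_def)
  have KD: "K * a 0 / \<rho> \<le> K * D / \<rho>" using aD K0 pos by (intro divide_right_mono mult_left_mono) auto
  have "p t \<le> max (p 0) q * exp (K * a 0 / \<rho>)" using p_upper[OF t] q0 unfolding q_def K_def by simp
  also have "\<dots> \<le> (q + D) * exp (K * D / \<rho>)"
    using pD KD q0 by (intro mult_mono) auto
  finally show "p t \<le> ((\<beta> - \<mu>) / (2 * \<beta>) + D) * exp (\<bar>\<delta> - \<beta>\<bar> * D / \<rho>)" unfolding q_def K_def .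
  have "(q - D) * exp (- (K * D / \<rho>)) \<le> min (p 0) q * exp (- (K * a 0 / \<rho>))"
    using pD KD q0 Dq unfolding q_def[symmetric] by (intro mult_mono) auto
  also have "\<dots> \<le> p t" using p_lower[OF c t] unfolding q_def K_def by simp
  finally show "p t \<ge> ((\<beta> - \<mu>) / (2 * \<beta>) - D) * exp (- (\<bar>\<delta> - \<beta>\<bar> * D / \<rho>))" unfolding q_def K_def .
  show "\<bar>a t\<bar> \<le> D" using a_nonneg[OF t] a_le[OF t] aD by simp
qed

end

theorem proposition6p12:
  fixes \<alpha> \<gamma> \<mu> \<delta> \<rho> \<beta> :: real
  assumes pos: "\<alpha> > 0" "\<gamma> > 0" "\<mu> > 0" "\<delta> > 0" "\<rho> > 0"
    and beta: "\<beta> = \<alpha> + \<gamma>"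
  defines "f \<equiv> pa_field \<alpha> \<gamma> \<mu> \<delta> \<rho>"
  shows
    "(\<beta> \<le> \<mu> \<longrightarrow>
        glob_asym_stable feas f (0, 0) \<and>
        (\<forall>x. is_solution f x \<and> x 0 \<in> feas \<longrightarrow>
              ((\<lambda>t. fst (x t)) \<longlongrightarrow> 0) at_top \<and> ((\<lambda>t. snd (x t)) \<longlongrightarrow> 0) at_top))
     \<and>
     (\<beta> > \<mu> \<longrightarrow>
        (\<forall>x. is_solution f x \<and> x 0 \<in> feas \<and> fst (x 0) = 0 \<longrightarrow>
              (\<forall>t\<ge>0. fst (x t) = 0 \<and> x t \<in> feas) \<and>
              ((\<lambda>t. snd (x t)) \<longlongrightarrow> 0) at_top \<and>
              (x \<longlongrightarrow> (0, 0)) at_top) \<and>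
        (\<forall>x. is_solution f x \<and> x 0 \<in> feas \<and> fst (x 0) > 0 \<longrightarrow>
              (x \<longlongrightarrow> ((1 - \<mu> / \<beta>) / 2, 0)) at_top) \<and>
        is_saddle f (0, 0) \<and>
        loc_asym_stable feas f ((1 - \<mu> / \<beta>) / 2, 0))"
proof -
  have bpos: "\<beta> > 0" using pos beta by simp
  have S: "sol \<alpha> \<gamma> \<mu> \<delta> \<rho> \<beta> x" if "is_solution f x" "x 0 \<in> feas" for x
    by unfold_locales (use pos beta that in \<open>auto simp: f_def\<close>)
  have f0: "f (0, 0) = 0" by (simp add: f_def pa_field_def Let_def zero_prod_def)
  have part1: "glob_asym_stable feas f (0, 0) \<and>
        (\<forall>x. is_solution f x \<and> x 0 \<in> feas \<longrightarrow>
              ((\<lambda>t. fst (x t)) \<longlongrightarrow> 0) at_top \<and> ((\<lambda>t. snd (x t)) \<longlongrightarrow> 0) at_top)" if c: "\<beta> \<le> \<mu>"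
  proof -
    have conv: "\<forall>x. is_solution f x \<and> x 0 \<in> feas \<longrightarrow>
        ((\<lambda>t. fst (x t)) \<longlongrightarrow> 0) at_top \<and> ((\<lambda>t. snd (x t)) \<longlongrightarrow> 0) at_top \<and> (x \<longlongrightarrow> (0, 0)) at_top"
      using sol.final_low[OF S c] by blast
    define M where "M = exp (\<bar>\<delta> - \<beta>\<bar> / \<rho>) + 1"
    have M0: "M > 0" unfolding M_def by (simp add: add_pos_pos)
    have stab: "\<forall>\<epsilon>>0. \<exists>d>0. \<forall>x. is_solution f x \<and> x 0 \<in> feas \<and> dist (x 0) (0, 0) < d \<longrightarrow>
          (\<forall>t\<ge>0. dist (x t) (0, 0) < \<epsilon>)"
    proof (intro allI impI)
      fix \<epsilon> :: real assume e: "\<epsilon> > 0"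
      show "\<exists>d>0. \<forall>x. is_solution f x \<and> x 0 \<in> feas \<and> dist (x 0) (0, 0) < d \<longrightarrow>
          (\<forall>t\<ge>0. dist (x t) (0, 0) < \<epsilon>)"
      proof (rule exI[of _ "\<epsilon> / M"], intro conjI allI impI)
        show "\<epsilon> / M > 0" using e M0 by simp
        fix x t assume h: "is_solution f x \<and> x 0 \<in> feas \<and> dist (x 0) (0, 0) < \<epsilon> / M" and t: "(t::real) \<ge> 0"
        have "dist (x t) (0, 0) \<le> M * dist (x 0) (0, 0)"
          using sol.stab_low[OF S c t] h unfolding M_def by blast
        also have "\<dots> < M * (\<epsilon> / M)" using h M0 by (intro mult_strict_left_mono) auto
        also have "\<dots> = \<epsilon>" using M0 by simp
        finally show "dist (x t) (0, 0) < \<epsilon>" .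
      qed
    qed
    have att: "\<exists>\<eta>>0. \<forall>x. is_solution f x \<and> x 0 \<in> feas \<and> dist (x 0) (0, 0) < \<eta> \<longrightarrow>
          (x \<longlongrightarrow> (0, 0)) at_top"
      by (rule exI[of _ 1]) (use conv in auto)
    have loc: "loc_asym_stable feas f (0, 0)"
      unfolding loc_asym_stable_def using f0 stab att by (intro conjI)
    have glob: "glob_asym_stable feas f (0, 0)"
      unfolding glob_asym_stable_def using loc conv by blast
    show ?thesis using glob conv by blast
  qed
  have part2: "(\<forall>x. is_solution f x \<and> x 0 \<in> feas \<and> fst (x 0) = 0 \<longrightarrow>
              (\<forall>t\<ge>0. fst (x t) = 0 \<and> x t \<in> feas) \<and>
              ((\<lambda>t. snd (x t)) \<longlongrightarrow> 0) at_top \<and>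
              (x \<longlongrightarrow> (0, 0)) at_top) \<and>
        (\<forall>x. is_solution f x \<and> x 0 \<in> feas \<and> fst (x 0) > 0 \<longrightarrow>
              (x \<longlongrightarrow> ((1 - \<mu> / \<beta>) / 2, 0)) at_top) \<and>
        is_saddle f (0, 0) \<and>
        loc_asym_stable feas f ((1 - \<mu> / \<beta>) / 2, 0)" if c: "\<beta> > \<mu>"
  proof -
    have A: "\<forall>x. is_solution f x \<and> x 0 \<in> feas \<and> fst (x 0) = 0 \<longrightarrow>
              (\<forall>t\<ge>0. fst (x t) = 0 \<and> x t \<in> feas) \<and>
              ((\<lambda>t. snd (x t)) \<longlongrightarrow> 0) at_top \<and>
              (x \<longlongrightarrow> (0, 0)) at_top"
      using sol.final_zero[OF S] by blast
    have B: "\<forall>x. is_solution f x \<and> x 0 \<in> feas \<and> fst (x 0) > 0 \<longrightarrow>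
              (x \<longlongrightarrow> ((1 - \<mu> / \<beta>) / 2, 0)) at_top"
      using sol.final_high[OF S] c by blast
    define J where "J = (\<lambda>h::real \<times> real. ((\<beta> - \<mu>) * fst h, - \<rho> * snd h))"
    have fe: "f = (\<lambda>z. (fst z * ((\<beta> - \<mu>) - 2 * \<beta> * fst z + (\<delta> - \<beta>) * snd z), - (2 * \<delta> * fst z + \<rho>) * snd z))"
      by (simp add: f_def pa_field_def Let_def beta fun_eq_iff)
    have dJ: "(f has_derivative J) (at (0, 0))"
      unfolding fe J_def
      apply (rule derivative_eq_intros refl)+
      apply (auto simp: fun_eq_iff)
      done
    have C: "is_saddle f (0, 0)"
      unfolding is_saddle_def
    proof (intro conjI exI)
      show "f (0, 0) = 0" by (rule f0)
      show "(f has_derivative J) (at (0, 0))" by (rule dJ)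
      show "((0::real), (1::real)) \<noteq> 0" by (simp add: zero_prod_def)
      show "((1::real), (0::real)) \<noteq> 0" by (simp add: zero_prod_def)
      show "J (0, 1) = (- \<rho>) *\<^sub>R (0, 1)" by (simp add: J_def)
      show "J (1, 0) = (\<beta> - \<mu>) *\<^sub>R (1, 0)" by (simp add: J_def)
      show "- \<rho> < 0" using pos by simp
      show "0 < \<beta> - \<mu>" using c by simp
    qed
    define q where "q = (\<beta> - \<mu>) / (2 * \<beta>)"
    define K where "K = \<bar>\<delta> - \<beta>\<bar>"
    have qe: "(1 - \<mu> / \<beta>) / 2 = q" unfolding q_def using bpos by (simp add: field_simps)
    have q0: "q > 0" unfolding q_def using c bpos by simp
    have fE: "f (q, 0) = 0"
    proof -
      have "2 * \<beta> * q = \<beta> - \<mu>" unfolding q_def using bpos by (simp add: field_simps)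
      then show ?thesis by (simp add: fe zero_prod_def)
    qed
    have stab: "\<forall>\<epsilon>>0. \<exists>d>0. \<forall>x. is_solution f x \<and> x 0 \<in> feas \<and> dist (x 0) (q, 0) < d \<longrightarrow>
          (\<forall>t\<ge>0. dist (x t) (q, 0) < \<epsilon>)"
    proof (intro allI impI)
      fix \<epsilon> :: real assume e: "\<epsilon> > 0"
      have c1: "isCont (\<lambda>D. (q + D) * exp (K * D / \<rho>)) 0" using pos by (intro continuous_intros) auto
      have c2: "isCont (\<lambda>D. (q - D) * exp (- (K * D / \<rho>))) 0" using pos by (intro continuous_intros) auto
      obtain d1 where d1: "d1 > 0" "\<And>D. dist D 0 < d1 \<Longrightarrow> dist ((q + D) * exp (K * D / \<rho>)) q < \<epsilon> / 2"
        using c1[unfolded continuous_at_eps_delta, rule_format, of "\<epsilon> / 2"] e by auto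
      obtain d2 where d2: "d2 > 0" "\<And>D. dist D 0 < d2 \<Longrightarrow> dist ((q - D) * exp (- (K * D / \<rho>))) q < \<epsilon> / 2"
        using c2[unfolded continuous_at_eps_delta, rule_format, of "\<epsilon> / 2"] e by auto
      define d where "d = min (min d1 d2) (min q (\<epsilon> / 2))"
      show "\<exists>d>0. \<forall>x. is_solution f x \<and> x 0 \<in> feas \<and> dist (x 0) (q, 0) < d \<longrightarrow>
          (\<forall>t\<ge>0. dist (x t) (q, 0) < \<epsilon>)"
      proof (rule exI[of _ d], intro conjI allI impI)
        show "d > 0" unfolding d_def using d1 d2 q0 e by simp
        fix x t assume h: "is_solution f x \<and> x 0 \<in> feas \<and> dist (x 0) (q, 0) < d" and t: "(t::real) \<ge> 0"
        interpret s: sol \<alpha> \<gamma> \<mu> \<delta> \<rho> \<beta> x using S h by blast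
        define D0 where "D0 = dist (x 0) (q, 0)"
        have D0: "D0 < d" "D0 \<ge> 0" using h unfolding D0_def by auto
        have D0q: "D0 \<le> q" using D0 unfolding d_def by simp
        have up: "s.p t \<le> (q + D0) * exp (K * D0 / \<rho>)"
          using s.stab_high(1)[OF c t _ D0q[unfolded q_def]] unfolding D0_def q_def K_def by simp
        have lo: "s.p t \<ge> (q - D0) * exp (- (K * D0 / \<rho>))"
          using s.stab_high(2)[OF c t _ D0q[unfolded q_def]] unfolding D0_def q_def K_def by simp
        have at: "\<bar>s.a t\<bar> \<le> D0"
          using s.stab_high(3)[OF c t _ D0q[unfolded q_def]] unfolding D0_def q_def by simp
        have "dist D0 0 < d1" using D0 unfolding d_def by simp
        then have "dist ((q + D0) * exp (K * D0 / \<rho>)) q < \<epsilon> / 2" by (rule d1(2))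
        then have u: "(q + D0) * exp (K * D0 / \<rho>) < q + \<epsilon> / 2" by (simp only: dist_real_def abs_less_iff) linarith
        have "dist D0 0 < d2" using D0 unfolding d_def by simp
        then have "dist ((q - D0) * exp (- (K * D0 / \<rho>))) q < \<epsilon> / 2" by (rule d2(2))
        then have l: "(q - D0) * exp (- (K * D0 / \<rho>)) > q - \<epsilon> / 2" by (simp only: dist_real_def abs_less_iff) linarith
        have De: "D0 < \<epsilon> / 2" using D0 unfolding d_def by simp
        have "dist (x t) (q, 0) \<le> \<bar>fst (x t) - q\<bar> + \<bar>snd (x t) - 0\<bar>"
          using dist_pair_le[of "x t" "(q, 0)"] by simp
        also have "\<dots> = \<bar>s.p t - q\<bar> + \<bar>s.a t\<bar>" by (simp add: s.p_def s.a_def)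
        also have "\<dots> < \<epsilon>" using up lo at u l De by (simp add: abs_less_iff)
        finally show "dist (x t) (q, 0) < \<epsilon>" .
      qed
    qed
    have att: "\<exists>\<eta>>0. \<forall>x. is_solution f x \<and> x 0 \<in> feas \<and> dist (x 0) (q, 0) < \<eta> \<longrightarrow>
          (x \<longlongrightarrow> (q, 0)) at_top"
    proof (rule exI[of _ q], intro conjI allI impI)
      show "q > 0" by (rule q0)
      fix x assume h: "is_solution f x \<and> x 0 \<in> feas \<and> dist (x 0) (q, 0) < q"
      have "dist (fst (x 0)) (fst (q, 0::real)) < q" using h dist_fst_le[of "x 0" "(q, 0)"] by linarith
      then have "fst (x 0) > 0" by (simp add: dist_real_def abs_less_iff)
      then show "(x \<longlongrightarrow> (q, 0)) at_top" using B h qe by auto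
    qed
    have D: "loc_asym_stable feas f ((1 - \<mu> / \<beta>) / 2, 0)"
      unfolding loc_asym_stable_def qe using fE stab att by (intro conjI)
    show ?thesis using A B C D by blast
  qed
  have I: "\<beta> \<le> \<mu> \<longrightarrow> glob_asym_stable feas f (0, 0) \<and>
        (\<forall>x. is_solution f x \<and> x 0 \<in> feas \<longrightarrow>
              ((\<lambda>t. fst (x t)) \<longlongrightarrow> 0) at_top \<and> ((\<lambda>t. snd (x t)) \<longlongrightarrow> 0) at_top)"
    by (rule impI) (rule part1)
  have II: "\<beta> > \<mu> \<longrightarrow> (\<forall>x. is_solution f x \<and> x 0 \<in> feas \<and> fst (x 0) = 0 \<longrightarrow>
              (\<forall>t\<ge>0. fst (x t) = 0 \<and> x t \<in> feas) \<and>
              ((\<lambda>t. snd (x t)) \<longlongrightarrow> 0) at_top \<and>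
              (x \<longlongrightarrow> (0, 0)) at_top) \<and>
        (\<forall>x. is_solution f x \<and> x 0 \<in> feas \<and> fst (x 0) > 0 \<longrightarrow>
              (x \<longlongrightarrow> ((1 - \<mu> / \<beta>) / 2, 0)) at_top) \<and>
        is_saddle f (0, 0) \<and>
        loc_asym_stable feas f ((1 - \<mu> / \<beta>) / 2, 0)"
    by (rule impI) (rule part2)
  show ?thesis using I II by (rule conjI)
qed

end
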